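(* Let $D$ be a delta-matroid on $E\cup\overline{E}$ for a finite set $E$. If $E=\emptyset$, then $U_D(u,v)=1$. For any $i\in E$, $$U_D(u,v)=\begin{cases}U_{D/i}(u,v)+U_{D\setminus i}(u,v)+u\,U_{D(i)}(u,v), & \text{if } i \text{ is neither a loop nor a coloop},\\ (u+v+1)\,U_{D\setminus i}(u,v), & \text{if } i \text{ is a loop or a coloop}.\end{cases}$$
   Context: For a finite $E\subseteq\{1,2,\dots\}$ let $E\cup\overline{E}$ consist of $E$ and formal copies $\overline{i}$ ($i\in E$), with involution $a\mapsto\overline{a}$; $\overline{S}=\{\overline{a}:a\in S\}$. A subset is admissible if it contains at most one of $i,\overline{i}$ for each $i$; $\operatorname{AdS}(E)$ denotes the set of admissible subsets of $E\cup\overline{E}$. In $\mathbb{R}^E$ set $e_{\overline{i}}=-e_i$, $e_S=\sum_{a\in S}e_a$. A delta-matroid on $E\cup\overline{E}$ is a nonempty collection $\mathcal{F}$ of admissible sets of size $|E|$ (feasible sets) such that $\operatorname{Conv}\{e_B:B\in\mathcal{F}\}$ has all edges parallel to some $e_i$ or $e_i\pm e_j$. Rank function: $g_D(S)=\max_{B\in\mathcal{F}}(|S\cap B|-|\overline{S}\cap B|)$. $U$-polynomial: $U_D(u,v)=\sum_{S\in\operatorname{AdS}(E)}u^{|E|-|S|}v^{(|S|-g_D(S))/2}$. For $i\in E$: $i$ is a loop if no feasible set contains $i$, a coloop if every feasible set contains $i$. If $i$ is not a loop, $D/i$ is the delta-matroid on $(E\setminus\{i\})\cup\overline{(E\setminus\{i\})}$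 with feasible sets $B\setminus\{i\}$ for feasible $B\ni i$; if $i$ is not a coloop, $D\setminus i$ has feasible sets $B\setminus\{\overline{i}\}$ for feasible $B\ni\overline{i}$; $D(i)$ has feasible sets $B\setminus\{i,\overline{i}\}$ for all feasible $B$; if $i$ is a loop or a coloop, $D/i=D\setminus i=D(i)$. *)

theory Defs
  imports "HOL-Analysis.Analysis" "HOL-Library.Function_Algebras"
begin

(* Pointwise real vector space structure on functions, so that R^E can be
   modelled as nat => real (coordinates outside E are zero). *)
instantiation "fun" :: (type, real_vector) real_vector
begin
definition scaleR_fun :: "real \<Rightarrow> ('a \<Rightarrow> 'b) \<Rightarrow> 'a \<Rightarrow> 'b"
  where "scaleR_fun c f = (\<lambda>x. c *\<^sub>R f x)"
instance
  by standard (auto simp: scaleR_fun_def fun_eq_iff scaleR_add_right scaleR_add_left)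
end

(* Elements of E \<union> \<bar>E\<close> are encoded as integers: i \<in> E is int i, its copy \<bar>i\<close>
   is - int i.  The involution is negation. *)
definition signed_ground :: "nat set \<Rightarrow> int set" where
  "signed_ground E = int ` E \<union> uminus ` int ` E"

definition admissible :: "nat set \<Rightarrow> int set \<Rightarrow> bool" where
  "admissible E S \<longleftrightarrow> S \<subseteq> signed_ground E \<and> (\<forall>a\<in>S. - a \<notin> S)"

definition AdS :: "nat set \<Rightarrow> int set set" where
  "AdS E = {S. admissible E S}"

(* e_S = sum_{a in S} e_a, with e_{bar i} = - e_i *)
definition indvec :: "int set \<Rightarrow> nat \<Rightarrow> real" where
  "indvec S = (\<lambda>j. (if int j \<in> S then 1 else 0) - (if - int j \<in> S then 1 else 0))"

definition unitvec :: "nat \<Rightarrow> nat \<Rightarrow> real" where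
  "unitvec i = (\<lambda>j. if j = i then 1 else 0)"

definition edge_directions :: "nat set \<Rightarrow> (nat \<Rightarrow> real) set" where
  "edge_directions E =
     {unitvec i | i. i \<in> E} \<union>
     {unitvec i + unitvec j | i j. i \<in> E \<and> j \<in> E \<and> i \<noteq> j} \<union>
     {unitvec i - unitvec j | i j. i \<in> E \<and> j \<in> E \<and> i \<noteq> j}"

definition is_edge :: "(nat \<Rightarrow> real) set \<Rightarrow> (nat \<Rightarrow> real) set \<Rightarrow> bool" where
  "is_edge F P \<longleftrightarrow> F face_of P \<and> (\<exists>x y. x \<noteq> y \<and> F = closed_segment x y)"

definition delta_matroid :: "nat set \<Rightarrow> int set set \<Rightarrow> bool" where
  "delta_matroid E F \<longleftrightarrow>
     finite E \<and> 0 \<notin> E \<and> F \<noteq> {} \<and>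
     (\<forall>B\<in>F. admissible E B \<and> card B = card E) \<and>
     (\<forall>Fc. is_edge Fc (convex hull (indvec ` F)) \<longrightarrow>
        (\<exists>x y. Fc = closed_segment x y \<and>
               (\<exists>d\<in>edge_directions E. \<exists>c::real. y - x = c *\<^sub>R d)))"

definition rank_dm :: "int set set \<Rightarrow> int set \<Rightarrow> int" where
  "rank_dm F S = Max ((\<lambda>B. int (card (S \<inter> B)) - int (card (uminus ` S \<inter> B))) ` F)"

definition Upoly :: "nat set \<Rightarrow> int set set \<Rightarrow> 'a::comm_ring_1 \<Rightarrow> 'a \<Rightarrow> 'a" where
  "Upoly E F u v =
     (\<Sum>S\<in>AdS E. u ^ (card E - card S) * v ^ nat ((int (card S) - rank_dm F S) div 2))"

definition is_loop :: "int set set \<Rightarrow> nat \<Rightarrow> bool" where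
  "is_loop F i \<longleftrightarrow> (\<forall>B\<in>F. int i \<notin> B)"

definition is_coloop :: "int set set \<Rightarrow> nat \<Rightarrow> bool" where
  "is_coloop F i \<longleftrightarrow> (\<forall>B\<in>F. int i \<in> B)"

definition dm_proj :: "int set set \<Rightarrow> nat \<Rightarrow> int set set" where
  "dm_proj F i = (\<lambda>B. B - {int i, - int i}) ` F"

definition dm_contract :: "int set set \<Rightarrow> nat \<Rightarrow> int set set" where
  "dm_contract F i =
     (if is_loop F i \<or> is_coloop F i then dm_proj F i
      else (\<lambda>B. B - {int i}) ` {B\<in>F. int i \<in> B})"

definition dm_delete :: "int set set \<Rightarrow> nat \<Rightarrow> int set set" where
  "dm_delete F i =
     (if is_loop F i \<or> is_coloop F i then dm_proj F i
      else (\<lambda>B. B - {- int i}) ` {B\<in>F. - int i \<in> B})"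

end

theory Submission
  imports Defs
begin


definition Lf :: "nat set \<Rightarrow> (nat \<Rightarrow> real) \<Rightarrow> (nat \<Rightarrow> real) \<Rightarrow> real" where
  "Lf E w z = (\<Sum>k\<in>E. w k * z k)"

lemma fun_add_apply: "((f::nat\<Rightarrow>real) + g) k = f k + g k" by (simp add: plus_fun_def)
lemma fun_diff_apply: "((f::nat\<Rightarrow>real) - g) k = f k - g k" by simp
lemma fun_scale_apply: "(c *\<^sub>R (f::nat\<Rightarrow>real)) k = c * f k" by (simp add: scaleR_fun_def)

lemma Lf_linear: "linear (Lf E w)"
  by (rule linearI) (simp_all add: Lf_def fun_add_apply fun_scale_apply sum.distrib
      distrib_left sum_distrib_left mult.left_commute)

lemma face_edge:
  fixes V :: "(nat \<Rightarrow> real) set" and f :: "(nat \<Rightarrow> real) \<Rightarrow> real"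
  assumes finV: "finite V" and lin: "linear f" and le: "\<And>v. v\<in>V \<Longrightarrow> f v \<le> m"
    and xV: "x\<in>V" and yV: "y\<in>V" and fx: "f x = m" and fy: "f y = m"
    and only: "\<And>v. v\<in>V \<Longrightarrow> f v = m \<Longrightarrow> v = x \<or> v = y" and xy: "x \<noteq> y"
  shows "is_edge (closed_segment x y) (convex hull V)"
proof -
  have hull_le: "f z \<le> m" if zin: "z \<in> convex hull V" for z
  proof -
    obtain u where u: "\<forall>v\<in>V. 0 \<le> u v" "sum u V = 1" "(\<Sum>v\<in>V. u v *\<^sub>R v) = z"
      using zin convex_hull_finite[OF finV] by auto
    have "f z = (\<Sum>v\<in>V. u v * f v)"
      proof -
        have "f z = (\<Sum>v\<in>V. f (u v *\<^sub>R v))" unfolding u(3)[symmetric] by (rule linear_sum[OF lin])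
        also have "\<dots> = (\<Sum>v\<in>V. u v * f v)" by (rule sum.cong) (simp_all add: linear_scale[OF lin])
        finally show ?thesis .
      qed
    also have "\<dots> \<le> (\<Sum>v\<in>V. u v * m)"
      by (rule sum_mono) (simp add: u(1) le mult_left_mono)
    also have "\<dots> = m" using u(2) by (simp add: sum_distrib_right[symmetric])
    finally show ?thesis .
  qed
  have seg_sub: "closed_segment x y \<subseteq> convex hull V"
    unfolding segment_convex_hull by (rule hull_mono) (use xV yV in auto)
  have Fc: "closed_segment x y = {z \<in> convex hull V. f z = m}"
  proof
    show "closed_segment x y \<subseteq> {z \<in> convex hull V. f z = m}"
    proof
      fix z assume z: "z \<in> closed_segment x y"
      then obtain t where "z = (1 - t) *\<^sub>R x + t *\<^sub>R y" by (auto simp: in_segment)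
      hence "f z = (1 - t) * m + t * m"
        using linear_add[OF lin] linear_scale[OF lin] fx fy by simp
      hence "f z = m" by (simp add: algebra_simps)
      thus "z \<in> {z \<in> convex hull V. f z = m}" using z seg_sub by auto
    qed
  next
    show "{z \<in> convex hull V. f z = m} \<subseteq> closed_segment x y"
    proof
      fix z assume "z \<in> {z \<in> convex hull V. f z = m}"
      hence zh: "z \<in> convex hull V" and fz: "f z = m" by auto
      obtain u where u: "\<forall>v\<in>V. 0 \<le> u v" "sum u V = 1" "(\<Sum>v\<in>V. u v *\<^sub>R v) = z"
        using zh convex_hull_finite[OF finV] by auto
      have "f z = (\<Sum>v\<in>V. u v * f v)"
        proof -
        have "f z = (\<Sum>v\<in>V. f (u v *\<^sub>R v))" unfolding u(3)[symmetric] by (rule linear_sum[OF lin])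
        also have "\<dots> = (\<Sum>v\<in>V. u v * f v)" by (rule sum.cong) (simp_all add: linear_scale[OF lin])
        finally show ?thesis .
      qed
      hence "(\<Sum>v\<in>V. u v * (m - f v)) = 0"
        using fz u(2) by (simp add: right_diff_distrib sum_subtractf sum_distrib_right[symmetric])
      moreover have "\<forall>v\<in>V. 0 \<le> u v * (m - f v)" using u(1) le by simp
      ultimately have z0: "\<forall>v\<in>V. u v * (m - f v) = 0"
        using sum_nonneg_eq_0_iff[OF finV, of "\<lambda>v. u v * (m - f v)"] by simp
      have u0: "u v = 0" if "v \<in> V" "v \<noteq> x" "v \<noteq> y" for v
      proof -
        have "f v \<noteq> m" using only that by blast
        thus ?thesis using z0 that(1) by auto
      qed
      have sub: "{x, y} \<subseteq> V" using xV yV by auto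
      have "z = (\<Sum>v\<in>{x,y}. u v *\<^sub>R v)"
        using u(3) sum.mono_neutral_right[OF finV sub, of "\<lambda>v. u v *\<^sub>R v"] u0 by auto
      hence z2: "z = u x *\<^sub>R x + u y *\<^sub>R y" using xy by simp
      have "1 = (\<Sum>v\<in>{x,y}. u v)"
        using u(2) sum.mono_neutral_right[OF finV sub, of u] u0 by auto
      hence s2: "u x + u y = 1" using xy by simp
      show "z \<in> closed_segment x y"
        unfolding in_segment
      proof (intro exI[of _ "u y"] conjI)
        have "u x = 1 - u y" using s2 by simp
        thus "z = (1 - u y) *\<^sub>R x + u y *\<^sub>R y" using z2 by simp
        show "0 \<le> u y" using u(1) yV by auto
        show "u y \<le> 1" using u(1) xV s2 by auto
      qed
    qed
  qed
  have face: "closed_segment x y face_of convex hull V"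
    unfolding face_of_def
  proof (intro conjI ballI impI)
    show "closed_segment x y \<subseteq> convex hull V" by (rule seg_sub)
    show "convex (closed_segment x y)" by simp
  next
    fix a b z assume a: "a \<in> convex hull V" and b: "b \<in> convex hull V"
      and z: "z \<in> closed_segment x y" and zo: "z \<in> open_segment a b"
    obtain t where t: "0 < t" "t < 1" "z = (1 - t) *\<^sub>R a + t *\<^sub>R b"
      using zo by (auto simp: in_segment)
    have "f z = m" using z Fc by auto
    moreover have "f z = (1 - t) * f a + t * f b"
      unfolding t(3) linear_add[OF lin] linear_scale[OF lin] by simp
    ultimately have e: "(1 - t) * (m - f a) + t * (m - f b) = 0"
      by (simp add: algebra_simps)
    have p1: "(1 - t) * (m - f a) \<ge> 0" using t hull_le[OF a] by simp
    have p2: "t * (m - f b) \<ge> 0" using t hull_le[OF b] by simp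
    have "(1 - t) * (m - f a) = 0" "t * (m - f b) = 0" using e p1 p2 by linarith+
    hence "f a = m" "f b = m" using t by auto
    thus "a \<in> closed_segment x y" "b \<in> closed_segment x y" using Fc a b by auto
  qed
  show ?thesis unfolding is_edge_def using face xy by blast
qed


lemma seg_coord:
  fixes a b z d :: "nat \<Rightarrow> real"
  assumes "z \<in> closed_segment a b" "b - a = c *\<^sub>R d" "d k = 0"
  shows "z k = a k"
proof -
  obtain t where t: "z = (1 - t) *\<^sub>R a + t *\<^sub>R b" using assms(1) by (auto simp: in_segment)
  have "(b - a) k = 0" using assms(2,3) by (simp add: fun_scale_apply)
  hence "b k = a k" by simp
  moreover have "z k = (1 - t) * a k + t * b k" unfolding t by (simp add: fun_add_apply fun_scale_apply)
  ultimately show ?thesis by (simp add: algebra_simps)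
qed

lemma dir_support:
  assumes "d \<in> edge_directions E"
  shows "\<exists>p q. \<forall>k. k \<noteq> p \<and> k \<noteq> q \<longrightarrow> d k = 0"
  using assms unfolding edge_directions_def unitvec_def
  by (auto simp: fun_add_apply) blast+

lemma VCore:
  fixes V :: "(nat \<Rightarrow> real) set" and s :: "nat \<Rightarrow> real" and \<sigma> :: real
  assumes finE: "finite E" and finV: "finite V"
   and sign: "\<And>v k. v \<in> V \<Longrightarrow> k \<in> E \<Longrightarrow> v k = 1 \<or> v k = -1"
   and zero: "\<And>v k. v \<in> V \<Longrightarrow> k \<notin> E \<Longrightarrow> v k = 0"
   and edges: "\<forall>Fc. is_edge Fc (convex hull V) \<longrightarrow> (\<exists>x y. Fc = closed_segment x y \<and>
               (\<exists>d\<in>edge_directions E. \<exists>c::real. y - x = c *\<^sub>R d))"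
   and iE: "i \<in> E" and si: "s i = 0" and sb: "\<And>k. \<bar>s k\<bar> \<le> 1"
   and sig: "\<sigma> = 1 \<or> \<sigma> = -1"
   and x1: "x1 \<in> V" "x1 i = - \<sigma>" and ex: "\<exists>v\<in>V. v i = \<sigma>"
  shows "\<exists>y\<in>V. y i = \<sigma> \<and> Lf E s x1 \<le> Lf E s y + 2"
proof (rule ccontr)
  assume neg: "\<not> ?thesis"
  hence negb: "\<And>y. y\<in>V \<Longrightarrow> y i = \<sigma> \<Longrightarrow> Lf E s y + 2 < Lf E s x1" by force
  have ss: "\<sigma> * \<sigma> = 1" using sig by auto
  have sgn_i: "v i = \<sigma> \<or> v i = - \<sigma>" if "v \<in> V" for v
    using sign[OF that iE] sig by (elim disjE) simp_all
  define Vm where "Vm = {v\<in>V. v i = -\<sigma>}"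
  define Vp where "Vp = {v\<in>V. v i = \<sigma>}"
  have finm: "finite Vm" "finite Vp" using finV by (auto simp: Vm_def Vp_def)
  have nem: "Vm \<noteq> {}" "Vp \<noteq> {}" using x1 ex by (auto simp: Vm_def Vp_def)
  define Mm where "Mm = Max (Lf E s ` Vm)"
  define Mp where "Mp = Max (Lf E s ` Vp)"
  have "Max (Lf E s ` Vm) \<in> Lf E s ` Vm" using finm nem by (intro Max_in) auto
  then obtain pm where pm: "pm \<in> Vm" "Lf E s pm = Mm" unfolding Mm_def by auto
  have "Max (Lf E s ` Vp) \<in> Lf E s ` Vp" using finm nem by (intro Max_in) auto
  then obtain pp where pp: "pp \<in> Vp" "Lf E s pp = Mp" unfolding Mp_def by auto
  have leMm: "\<And>v. v\<in>Vm \<Longrightarrow> Lf E s v \<le> Mm" unfolding Mm_def using finm by auto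
  have leMp: "\<And>v. v\<in>Vp \<Longrightarrow> Lf E s v \<le> Mp" unfolding Mp_def using finm by auto
  define D where "D = Mm - Mp"
  have D2: "D > 2" using negb[of pp] pp leMm[of x1] x1 by (auto simp: Vm_def Vp_def D_def)
  define w where "w = (\<lambda>k. 2 * s k + (if k = i then D * \<sigma> else 0))"
  have phi: "Lf E w v = 2 * Lf E s v + D * \<sigma> * v i" for v
  proof -
    have "Lf E w v = (\<Sum>k\<in>E. 2 * (s k * v k)) + (\<Sum>k\<in>E. if k = i then D * \<sigma> * v k else 0)"
      unfolding Lf_def w_def sum.distrib[symmetric] by (rule sum.cong) (auto simp: algebra_simps)
    also have "\<dots> = 2 * Lf E s v + D * \<sigma> * v i"
      using finE iE by (simp add: Lf_def sum_distrib_left)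
    finally show ?thesis .
  qed
  define T where "T = Mm + Mp"
  have phiT: "Lf E w v \<le> T" if "v \<in> V" for v
  proof (cases "v i = \<sigma>")
    case True
    hence "v \<in> Vp" using that by (simp add: Vp_def)
    thus ?thesis using leMp[of v] True phi[of v] ss by (simp add: T_def D_def algebra_simps)
  next
    case False
    hence "v i = -\<sigma>" using sgn_i[OF that] by auto
    hence "v \<in> Vm" "v i = -\<sigma>" using that by (auto simp: Vm_def)
    thus ?thesis using leMm[of v] phi[of v] ss by (simp add: T_def D_def algebra_simps)
  qed
  have pmT: "Lf E w pm = T" using pm phi[of pm] ss by (simp add: Vm_def T_def D_def algebra_simps)
  have ppT: "Lf E w pp = T" using pp phi[of pp] ss by (simp add: Vp_def T_def D_def algebra_simps)
  define P where "P = {(a,b). a \<in> Vm \<and> b \<in> Vp \<and> Lf E w a = T \<and> Lf E w b = T}"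
  define h where "h = (\<lambda>(a::nat\<Rightarrow>real,b::nat\<Rightarrow>real). card {k\<in>E. a k \<noteq> b k})"
  have "(pm, pp) \<in> P" using pm pp pmT ppT by (simp add: P_def)
  hence "\<exists>xy. xy \<in> P \<and> (\<forall>q. q \<in> P \<longrightarrow> h xy \<le> h q)" by (rule ex_has_least_nat)
  then obtain xy where xy: "xy \<in> P" and hmin0: "\<And>q. q \<in> P \<Longrightarrow> h xy \<le> h q"
    by auto
  obtain x y where xyd: "xy = (x, y)" by (cases xy)
  have hmin: "\<And>a b. (a,b) \<in> P \<Longrightarrow> h (x,y) \<le> h (a,b)" using hmin0 xyd by auto
  have xV: "x \<in> V" "x i = -\<sigma>" "Lf E w x = T" and yV: "y \<in> V" "y i = \<sigma>" "Lf E w y = T"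
  proof -
    have "(x,y) \<in> P" using xy xyd by simp
    hence "x \<in> Vm \<and> y \<in> Vp \<and> Lf E w x = T \<and> Lf E w y = T" unfolding P_def by simp
    thus "x \<in> V" "x i = -\<sigma>" "Lf E w x = T" "y \<in> V" "y i = \<sigma>" "Lf E w y = T"
      unfolding Vm_def Vp_def by auto
  qed
  define w2 where "w2 = (\<lambda>k. x k + y k)"
  define C where "C = (\<Sum>k\<in>E. if x k = y k then 2 else 0::real)"
  have psi_le: "Lf E w2 v \<le> C" if vV: "v \<in> V" for v
    unfolding Lf_def C_def w2_def
  proof (rule sum_mono)
    fix k assume k: "k \<in> E"
    show "(x k + y k) * v k \<le> (if x k = y k then 2 else 0)"
      using sign[OF xV(1) k] sign[OF yV(1) k] sign[OF vV k] by (elim disjE) simp_all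
  qed
  have psi_eq: "v k = x k" if vV: "v \<in> V" and eqC: "Lf E w2 v = C" and k: "k \<in> E" and xyk: "x k = y k" for v k
  proof -
    have "(x k + y k) * v k = (if x k = y k then 2 else 0)"
    proof (rule sum_mono_inv[of "\<lambda>k. (x k + y k) * v k" E])
      show "(\<Sum>k\<in>E. (x k + y k) * v k) = (\<Sum>k\<in>E. if x k = y k then 2 else 0)"
        using eqC unfolding Lf_def C_def w2_def .
      fix k assume k: "k \<in> E"
      show "(x k + y k) * v k \<le> (if x k = y k then 2 else 0)"
        using sign[OF xV(1) k] sign[OF yV(1) k] sign[OF vV k] by (elim disjE) simp_all
    qed (use k finE in auto)
    thus ?thesis using xyk sign[OF xV(1) k] sign[OF vV k] by (elim disjE) simp_all
  qed
  have psi_x: "Lf E w2 x = C" unfolding Lf_def C_def w2_def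
  proof (rule sum.cong[OF refl])
    fix k assume k: "k \<in> E"
    show "(x k + y k) * x k = (if x k = y k then 2 else 0)"
      using sign[OF xV(1) k] sign[OF yV(1) k] by (elim disjE) simp_all
  qed
  have psi_y: "Lf E w2 y = C" unfolding Lf_def C_def w2_def
  proof (rule sum.cong[OF refl])
    fix k assume k: "k \<in> E"
    show "(x k + y k) * y k = (if x k = y k then 2 else 0)"
      using sign[OF xV(1) k] sign[OF yV(1) k] by (elim disjE) simp_all
  qed
  define wF where "wF = (\<lambda>k. w k + w2 k)"
  have PhiS: "Lf E wF v = Lf E w v + Lf E w2 v" for v
    by (simp add: Lf_def wF_def distrib_right sum.distrib)
  have hsub: "{k\<in>E. v k \<noteq> z k} \<subseteq> {k\<in>E. x k \<noteq> y k}"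
    if "\<forall>k\<in>E. x k = y k \<longrightarrow> v k = x k" "z = x \<or> z = y" for v z
    using that by auto
  have eqv: "v = u" if vV: "v \<in> V" and uV: "u \<in> V" and zV: "z \<in> V"
      and A: "{k\<in>E. v k \<noteq> z k} = {k\<in>E. u k \<noteq> z k}"
      and agr: "\<forall>k\<in>E. u k = z k \<longrightarrow> v k = u k" for v u z
  proof
    fix k show "v k = u k"
    proof (cases "k \<in> E")
      case True
      show ?thesis
      proof (cases "u k = z k")
        case True thus ?thesis using agr \<open>k\<in>E\<close> by auto
      next
        case False
        hence "v k \<noteq> z k" using A \<open>k\<in>E\<close> by blast
        thus ?thesis using False sign[OF vV \<open>k\<in>E\<close>] sign[OF uV \<open>k\<in>E\<close>] sign[OF zV \<open>k\<in>E\<close>] by (elim disjE) simp_all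
      qed
    next
      case False thus ?thesis using zero[OF vV] zero[OF uV] by auto
    qed
  qed
  have only: "v = x \<or> v = y" if vV: "v \<in> V" and vm: "Lf E wF v = T + C" for v
  proof -
    have t1: "Lf E w v = T" and t2: "Lf E w2 v = C"
      using vm PhiS[of v] phiT[OF vV] psi_le[OF vV] by linarith+
    have agr: "\<forall>k\<in>E. x k = y k \<longrightarrow> v k = x k" using psi_eq[OF vV t2] by auto
    have fin: "finite {k\<in>E. x k \<noteq> y k}" using finE by auto
    show ?thesis
    proof (cases "v i = \<sigma>")
      case False
      hence "v i = -\<sigma>" using sgn_i[OF vV] by auto
      hence "(v, y) \<in> P" using vV t1 xV yV by (auto simp: P_def Vm_def Vp_def)
      hence c1: "card {k\<in>E. x k \<noteq> y k} \<le> card {k\<in>E. v k \<noteq> y k}" by (rule hmin[unfolded h_def, simplified])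
      have sub: "{k\<in>E. v k \<noteq> y k} \<subseteq> {k\<in>E. x k \<noteq> y k}" using agr by auto
      have eqset: "{k\<in>E. v k \<noteq> y k} = {k\<in>E. x k \<noteq> y k}"
        by (rule card_subset_eq[OF fin sub]) (use card_mono[OF fin sub] c1 in linarith)
      have "v = x" by (rule eqv[OF vV xV(1) yV(1) eqset agr])
      thus ?thesis by simp
    next
      case True
      hence "(x, v) \<in> P" using vV t1 xV yV by (auto simp: P_def Vm_def Vp_def)
      hence c1: "card {k\<in>E. x k \<noteq> y k} \<le> card {k\<in>E. x k \<noteq> v k}" by (rule hmin[unfolded h_def, simplified])
      have e1: "{k\<in>E. x k \<noteq> y k} = {k\<in>E. y k \<noteq> x k}" by auto
      have e2: "{k\<in>E. x k \<noteq> v k} = {k\<in>E. v k \<noteq> x k}" by auto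
      have fin2: "finite {k\<in>E. y k \<noteq> x k}" using finE by simp
      have sub: "{k\<in>E. v k \<noteq> x k} \<subseteq> {k\<in>E. y k \<noteq> x k}" using agr by auto
      have eqset: "{k\<in>E. v k \<noteq> x k} = {k\<in>E. y k \<noteq> x k}"
        by (rule card_subset_eq[OF fin2 sub]) (use card_mono[OF fin2 sub] c1 e1 e2 in simp)
      have agr2: "\<forall>k\<in>E. y k = x k \<longrightarrow> v k = y k" using agr by auto
      have "v = y" by (rule eqv[OF vV yV(1) xV(1) eqset agr2])
      thus ?thesis by simp
    qed
  qed
  have xney: "x \<noteq> y" using xV(2) yV(2) sig by auto
  have edge: "is_edge (closed_segment x y) (convex hull V)"
  proof (rule face_edge[OF finV Lf_linear _ xV(1) yV(1) _ _ only xney])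
    fix v assume v: "v \<in> V"
    show "Lf E wF v \<le> T + C" using PhiS[of v] phiT[OF v] psi_le[OF v] by linarith
  next
    show "Lf E wF x = T + C" using PhiS xV psi_x by simp
    show "Lf E wF y = T + C" using PhiS yV psi_y by simp
  qed
  then obtain a b d c where ab: "closed_segment x y = closed_segment a b"
    and d: "d \<in> edge_directions E" and c: "b - a = c *\<^sub>R d"
    using edges[rule_format, OF edge] by auto
  obtain p q where pq: "\<forall>k. k \<noteq> p \<and> k \<noteq> q \<longrightarrow> d k = 0" using dir_support[OF d] by blast
  have agreepq: "x k = y k" if "k \<noteq> p" "k \<noteq> q" for k
  proof -
    have "x \<in> closed_segment a b" "y \<in> closed_segment a b" using ab by (auto simp flip: ab)
    thus ?thesis using seg_coord[OF _ c, of _ k] pq that by metis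
  qed
  have "i = p \<or> i = q"
  proof (rule ccontr)
    assume "\<not> (i = p \<or> i = q)"
    hence "x i = y i" using agreepq by blast
    thus False using xV(2) yV(2) sig by auto
  qed
  then obtain j where agree: "\<And>k. k \<noteq> i \<Longrightarrow> k \<noteq> j \<Longrightarrow> x k = y k"
  proof
    assume "i = p" thus ?thesis using that[of q] agreepq by auto
  next
    assume "i = q" thus ?thesis using that[of p] agreepq by auto
  qed
  have "Lf E s y - Lf E s x = (\<Sum>k\<in>E. s k * (y k - x k))"
    by (simp add: Lf_def sum_subtractf[symmetric] algebra_simps)
  also have "\<dots> = (\<Sum>k\<in>E. if k = j then s j * (y j - x j) else 0)"
  proof (rule sum.cong[OF refl])
    fix k assume "k \<in> E"
    show "s k * (y k - x k) = (if k = j then s j * (y j - x j) else 0)"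
    proof (cases "k = j")
      case False
      show ?thesis
      proof (cases "k = i")
        case True thus ?thesis using si False by simp
      next
        case F2: False thus ?thesis using agree[OF F2 False] False by simp
      qed
    qed simp
  qed
  also have "\<dots> = (if j \<in> E then s j * (y j - x j) else 0)" using finE by simp
  also have "\<dots> \<ge> -2"
  proof (cases "j \<in> E")
    case True
    have "\<bar>y j - x j\<bar> \<le> 2" using sign[OF xV(1) True] sign[OF yV(1) True] by (elim disjE) simp_all
    hence "\<bar>s j\<bar> * \<bar>y j - x j\<bar> \<le> 1 * 2" by (intro mult_mono[OF sb[of j]]) simp_all
    hence "\<bar>s j * (y j - x j)\<bar> \<le> 1 * 2" by (simp add: abs_mult)
    thus ?thesis using True by auto
  qed simp
  finally have close: "Lf E s x \<le> Lf E s y + 2" by simp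
  have "Lf E s x = Mm" using xV phi[of x] ss by (simp add: T_def D_def algebra_simps)
  moreover have "Lf E s y = Mp" using yV phi[of y] ss by (simp add: T_def D_def algebra_simps)
  ultimately show False using close D2 by (simp add: D_def)
qed




lemma int_neg_eq[simp]: "(int a = - int b) = (a = 0 \<and> b = 0)" "(- int a = int b) = (a = 0 \<and> b = 0)"
  by linarith+

lemma sg_int: "0 \<notin> E \<Longrightarrow> (int k \<in> signed_ground E) = (k \<in> E)"
  unfolding signed_ground_def image_iff by auto

lemma sg_neg: "0 \<notin> E \<Longrightarrow> (- int k \<in> signed_ground E) = (k \<in> E)"
  unfolding signed_ground_def image_iff by auto

lemma sg_cases: "a \<in> signed_ground E \<Longrightarrow> (\<And>k. k \<in> E \<Longrightarrow> a = int k \<Longrightarrow> P) \<Longrightarrow> (\<And>k. k \<in> E \<Longrightarrow> a = - int k \<Longrightarrow> P) \<Longrightarrow> P"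
  unfolding signed_ground_def by blast

lemma sg_finite: "finite E \<Longrightarrow> finite (signed_ground E)"
  unfolding signed_ground_def by simp

lemma mem_uminus_int: "((a::int) \<in> uminus ` S) = (- a \<in> S)"
  by force

lemma Cnt_nat:
  assumes fin: "finite E" and z: "0 \<notin> E" and A: "A \<subseteq> signed_ground E"
  shows "card A = (\<Sum>k\<in>E. of_bool (int k \<in> A) + of_bool (- int k \<in> A))"
proof -
  define A1 where "A1 = {k\<in>E. int k \<in> A}"
  define A2 where "A2 = {k\<in>E. - int k \<in> A}"
  have eq: "A = int ` A1 \<union> (\<lambda>k. - int k) ` A2"
  proof
    show "A \<subseteq> int ` A1 \<union> (\<lambda>k. - int k) ` A2"
    proof
      fix a assume a: "a \<in> A"
      hence "a \<in> signed_ground E" using A by auto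
      thus "a \<in> int ` A1 \<union> (\<lambda>k. - int k) ` A2"
        by (rule sg_cases) (use a in \<open>auto simp: A1_def A2_def\<close>)
    qed
  qed (auto simp: A1_def A2_def)
  have disj: "int ` A1 \<inter> (\<lambda>k. - int k) ` A2 = {}"
    using z by (auto simp: A1_def A2_def)
  have "card A = card A1 + card A2"
    unfolding eq using fin disj
    by (subst card_Un_disjoint) (auto simp: A1_def A2_def card_image inj_on_def)
  also have "\<dots> = (\<Sum>k\<in>E. of_bool (int k \<in> A)) + (\<Sum>k\<in>E. of_bool (- int k \<in> A))"
    using fin by (simp add: A1_def A2_def sum_of_bool_eq Int_def)
  finally show ?thesis by (simp add: sum.distrib)
qed

lemma Cnt:
  assumes "finite E" "0 \<notin> E" "A \<subseteq> signed_ground E"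
  shows "(of_nat (card A) :: 'a::comm_semiring_1) = (\<Sum>k\<in>E. of_bool (int k \<in> A) + of_bool (- int k \<in> A))"
  using Cnt_nat[OF assms] by (simp add: of_nat_sum)

lemma card_adm:
  assumes fin: "finite E" and z: "0 \<notin> E" and S: "admissible E S"
  shows "card S \<le> card E"
proof -
  have "card S = (\<Sum>k\<in>E. of_bool (int k \<in> S) + of_bool (- int k \<in> S))"
    using Cnt_nat[OF fin z] S by (auto simp: admissible_def)
  also have "\<dots> \<le> (\<Sum>k\<in>E. 1)"
  proof (rule sum_mono)
    fix k assume "k \<in> E"
    have "\<not> (int k \<in> S \<and> - int k \<in> S)" using S by (auto simp: admissible_def)
    thus "of_bool (int k \<in> S) + of_bool (- int k \<in> S) \<le> (1::nat)" by auto
  qed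
  finally show ?thesis by simp
qed

lemma dm_facts:
  assumes "delta_matroid E F"
  shows "finite E" "0 \<notin> E" "F \<noteq> {}" "\<And>B. B \<in> F \<Longrightarrow> admissible E B"
    "\<And>B. B \<in> F \<Longrightarrow> card B = card E" "finite F"
proof -
  show "finite E" "0 \<notin> E" "F \<noteq> {}" "\<And>B. B \<in> F \<Longrightarrow> admissible E B"
    "\<And>B. B \<in> F \<Longrightarrow> card B = card E" using assms by (auto simp: delta_matroid_def)
  have "F \<subseteq> Pow (signed_ground E)" using assms by (auto simp: delta_matroid_def admissible_def)
  moreover have "finite E" using assms by (auto simp: delta_matroid_def)
  ultimately show "finite F" using sg_finite finite_subset by blast
qed

lemma Full:
  assumes dm: "delta_matroid E F" and B: "B \<in> F" and k: "k \<in> E"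
  shows "(int k \<in> B) \<longleftrightarrow> (- int k \<notin> B)"
proof -
  note f = dm_facts[OF dm]
  have adm: "admissible E B" using f(4)[OF B] .
  have le: "of_bool (int k \<in> B) + of_bool (- int k \<in> B) \<le> (1::nat)" for k
  proof -
    have "\<not> (int k \<in> B \<and> - int k \<in> B)" using adm by (auto simp: admissible_def)
    thus ?thesis by auto
  qed
  have "(\<Sum>k\<in>E. of_bool (int k \<in> B) + of_bool (- int k \<in> B)) = (\<Sum>k\<in>E. (1::nat))"
    using Cnt_nat[OF f(1) f(2), of B] adm f(5)[OF B] by (auto simp: admissible_def)
  hence "of_bool (int k \<in> B) + of_bool (- int k \<in> B) = (1::nat)"
    by (intro sum_mono_inv[of "\<lambda>k. of_bool (int k \<in> B) + of_bool (- int k \<in> B)" E "\<lambda>k. 1"]) (use le k f(1) in auto)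
  thus ?thesis by (cases "int k \<in> B"; cases "- int k \<in> B") auto
qed

definition valS :: "int set \<Rightarrow> int set \<Rightarrow> int" where
  "valS S B = int (card (S \<inter> B)) - int (card (uminus ` S \<inter> B))"

lemma rank_valS: "rank_dm F S = Max (valS S ` F)"
  by (simp add: rank_dm_def valS_def[abs_def])

lemma val_vec:
  assumes fin: "finite E" and z: "0 \<notin> E" and S: "S \<subseteq> signed_ground E" and B: "B \<subseteq> signed_ground E"
  shows "real_of_int (valS S B) = Lf E (indvec S) (indvec B)"
proof -
  have c1: "real (card (S \<inter> B)) = (\<Sum>k\<in>E. of_bool (int k \<in> S \<inter> B) + of_bool (- int k \<in> S \<inter> B))"
    by (rule Cnt[OF fin z]) (use S in auto)
  have c2: "real (card (uminus ` S \<inter> B)) = (\<Sum>k\<in>E. of_bool (int k \<in> uminus ` S \<inter> B) + of_bool (- int k \<in> uminus ` S \<inter> B))"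
    by (rule Cnt[OF fin z]) (use B in auto)
  have "real_of_int (valS S B) = real (card (S \<inter> B)) - real (card (uminus ` S \<inter> B))"
    by (simp add: valS_def)
  also have "\<dots> = (\<Sum>k\<in>E. (of_bool (int k \<in> S \<inter> B) + of_bool (- int k \<in> S \<inter> B)) -
        (of_bool (int k \<in> uminus ` S \<inter> B) + of_bool (- int k \<in> uminus ` S \<inter> B)))"
    unfolding c1 c2 sum_subtractf ..
  also have "\<dots> = Lf E (indvec S) (indvec B)"
    unfolding Lf_def indvec_def
    by (rule sum.cong[OF refl])
       (simp add: mem_uminus_int; cases "int x \<in> S"; cases "- int x \<in> S"; cases "int x \<in> B"; cases "- int x \<in> B"; simp)
  finally show ?thesis .
qed


lemma SCore:
  assumes dm: "delta_matroid E F" and iE: "i \<in> E" and S: "S \<subseteq> signed_ground E"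
    and Si: "int i \<notin> S" "- int i \<notin> S"
    and a: "a = int i \<or> a = - int i" and B1: "B1 \<in> F" "a \<notin> B1" and ex: "\<exists>B\<in>F. a \<in> B"
  shows "\<exists>B3\<in>F. a \<in> B3 \<and> valS S B1 \<le> valS S B3 + 2"
proof -
  note f = dm_facts[OF dm]
  have i0: "i \<noteq> 0" using iE f(2) by (metis)
  define \<sigma> where "\<sigma> = (if a = int i then 1 else -1::real)"
  have iv: "indvec B i = (if a \<in> B then \<sigma> else -\<sigma>)" if "B \<in> F" for B
    using Full[OF dm that iE] a i0 unfolding indvec_def \<sigma>_def by auto
  have Bsg: "B \<subseteq> signed_ground E" if "B \<in> F" for B
    using f(4)[OF that] by (auto simp: admissible_def)
  define V where "V = indvec ` F"
  have "\<exists>y\<in>V. y i = \<sigma> \<and> Lf E (indvec S) (indvec B1) \<le> Lf E (indvec S) y + 2"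
  proof (rule VCore[OF f(1)])
    show "finite V" unfolding V_def using f(6) by simp
    show "v k = 1 \<or> v k = -1" if vV: "v \<in> V" and kE: "k \<in> E" for v k
    proof -
      obtain B where B: "B \<in> F" "v = indvec B" using vV V_def by auto
      show ?thesis using Full[OF dm B(1) kE] B(2) unfolding indvec_def by auto
    qed
    show "v k = 0" if vV: "v \<in> V" and kE: "k \<notin> E" for v k
    proof -
      obtain B where B: "B \<in> F" "v = indvec B" using vV V_def by auto
      have "int k \<notin> B" "- int k \<notin> B" using Bsg[OF B(1)] sg_int[OF f(2)] sg_neg[OF f(2)] kE by auto
      thus ?thesis using B(2) unfolding indvec_def by auto
    qed
    show "\<forall>Fc. is_edge Fc (convex hull V) \<longrightarrow> (\<exists>x y. Fc = closed_segment x y \<and>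
               (\<exists>d\<in>edge_directions E. \<exists>c::real. y - x = c *\<^sub>R d))"
      using dm unfolding delta_matroid_def V_def by blast
    show "i \<in> E" by fact
    show "indvec S i = 0" using Si unfolding indvec_def by simp
    show "\<bar>indvec S k\<bar> \<le> 1" for k unfolding indvec_def by auto
    show "\<sigma> = 1 \<or> \<sigma> = -1" unfolding \<sigma>_def by auto
    show "indvec B1 \<in> V" using B1 V_def by auto
    show "indvec B1 i = - \<sigma>" using iv[OF B1(1)] B1(2) by simp
    show "\<exists>v\<in>V. v i = \<sigma>" using ex iv V_def by auto
  qed
  then obtain B3 where B3: "B3 \<in> F" "indvec B3 i = \<sigma>"
    and le: "Lf E (indvec S) (indvec B1) \<le> Lf E (indvec S) (indvec B3) + 2" unfolding V_def by auto
  have "a \<in> B3" using iv[OF B3(1)] B3(2) \<sigma>_def by (auto split: if_splits)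
  moreover have "real_of_int (valS S B1) \<le> real_of_int (valS S B3) + 2"
    using le val_vec[OF f(1) f(2) S Bsg[OF B1(1)]] val_vec[OF f(1) f(2) S Bsg[OF B3(1)]] by simp
  ultimately show ?thesis using B3(1) by (intro bexI[of _ B3]) simp_all
qed


lemma valS_remove:
  assumes "X \<inter> S = {}" "X \<inter> uminus ` S = {}"
  shows "valS S (B - X) = valS S B"
proof -
  have "S \<inter> (B - X) = S \<inter> B" "uminus ` S \<inter> (B - X) = uminus ` S \<inter> B" using assms by blast+
  thus ?thesis by (simp add: valS_def)
qed

lemma valS_insert:
  fixes a :: int
  assumes aS: "a \<notin> S" "- a \<notin> S" and finB: "finite B" and ex: "(a \<in> B) = (- a \<notin> B)"
  shows "valS (insert a S) B = valS S B + (if a \<in> B then 1 else -1)"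
proof (cases "a \<in> B")
  case True
  hence "- a \<notin> B" using ex by simp
  hence e1: "insert a S \<inter> B = insert a (S \<inter> B)" and e2: "uminus ` insert a S \<inter> B = uminus ` S \<inter> B"
    using True by auto
  have "card (insert a (S \<inter> B)) = card (S \<inter> B) + 1" using aS finB by simp
  thus ?thesis using True unfolding valS_def e1 e2 by simp
next
  case False
  hence nb: "- a \<in> B" using ex by simp
  hence e1: "insert a S \<inter> B = S \<inter> B" and e2: "uminus ` insert a S \<inter> B = insert (- a) (uminus ` S \<inter> B)"
    using False by auto
  have "- a \<notin> uminus ` S \<inter> B" using aS by (auto simp: mem_uminus_int)
  hence "card (insert (- a) (uminus ` S \<inter> B)) = card (uminus ` S \<inter> B) + 1" using finB by simp
  thus ?thesis using False unfolding valS_def e1 e2 by simp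
qed

lemma S_facts:
  assumes dm: "delta_matroid E F" and iE: "i \<in> E" and S: "S \<in> AdS (E - {i})"
  shows "S \<subseteq> signed_ground E" "int i \<notin> S" "- int i \<notin> S" "finite S" "admissible (E - {i}) S"
proof -
  note f = dm_facts[OF dm]
  have z: "0 \<notin> E - {i}" using f(2) by auto
  have sub: "S \<subseteq> signed_ground (E - {i})" using S by (auto simp: AdS_def admissible_def)
  thus "S \<subseteq> signed_ground E" unfolding signed_ground_def by auto
  show "int i \<notin> S" "- int i \<notin> S" using sub sg_int[OF z, of i] sg_neg[OF z, of i] by auto
  show "finite S" using sub sg_finite[of "E - {i}"] f(1) finite_subset by auto
  show "admissible (E - {i}) S" using S by (simp add: AdS_def)
qed

lemma rank_proj:
  assumes "int i \<notin> S" "- int i \<notin> S"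
  shows "rank_dm (dm_proj F i) S = rank_dm F S"
proof -
  have "valS S (B - {int i, - int i}) = valS S B" for B
    by (rule valS_remove) (use assms in \<open>auto simp: mem_uminus_int\<close>)
  thus ?thesis unfolding rank_valS dm_proj_def image_image by simp
qed

lemma rank_ins:
  assumes dm: "delta_matroid E F" and iE: "i \<in> E" and Si: "int i \<notin> S" "- int i \<notin> S"
    and a: "a = int i \<or> a = - int i"
  shows "rank_dm F (insert a S) = Max ((\<lambda>B. valS S B + (if a \<in> B then 1 else -1)) ` F)"
proof -
  note f = dm_facts[OF dm]
  have "valS (insert a S) B = valS S B + (if a \<in> B then 1 else -1)" if B: "B \<in> F" for B
  proof (rule valS_insert)
    show "a \<notin> S" "- a \<notin> S" using a Si by auto
    have "B \<subseteq> signed_ground E" using f(4)[OF B] by (auto simp: admissible_def)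
    thus "finite B" using f(1) sg_finite finite_subset by blast
    show "(a \<in> B) = (- a \<notin> B)" using Full[OF dm B iE] a by auto
  qed
  thus ?thesis unfolding rank_valS by (intro arg_cong[where f=Max] image_cong) auto
qed

lemma rank_sub:
  assumes "X \<inter> S = {}" "X \<inter> uminus ` S = {}"
  shows "rank_dm ((\<lambda>B. B - X) ` G) S = Max (valS S ` G)"
  unfolding rank_valS image_image using valS_remove[OF assms] by simp

lemma rank_main:
  assumes dm: "delta_matroid E F" and iE: "i \<in> E" and S: "S \<subseteq> signed_ground E"
    and Si: "int i \<notin> S" "- int i \<notin> S"
    and a: "a = int i \<or> a = - int i" and exa: "\<exists>B\<in>F. a \<in> B" and exn: "\<exists>B\<in>F. a \<notin> B"
  shows "rank_dm F (insert a S) = Max (valS S ` {B\<in>F. a \<in> B}) + 1"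
proof -
  note f = dm_facts[OF dm]
  define Fa where "Fa = {B\<in>F. a \<in> B}"
  have finFa: "finite Fa" using f(6) Fa_def by simp
  have neFa: "Fa \<noteq> {}" using exa Fa_def by auto
  define M where "M = Max (valS S ` Fa)"
  have "M \<in> valS S ` Fa" unfolding M_def using finFa neFa by (intro Max_in) auto
  then obtain B0 where B0: "B0 \<in> Fa" "valS S B0 = M" by auto
  have geM: "valS S B \<le> M" if "B \<in> Fa" for B unfolding M_def using finFa that by auto
  have "Max ((\<lambda>B. valS S B + (if a \<in> B then 1 else -1)) ` F) = M + 1"
  proof (rule Max_eqI)
    show "finite ((\<lambda>B. valS S B + (if a \<in> B then 1 else -1)) ` F)" using f(6) by simp
    show "M + 1 \<in> (\<lambda>B. valS S B + (if a \<in> B then 1 else -1)) ` F"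
      using B0 unfolding Fa_def by (intro image_eqI[of _ _ B0]) auto
  next
    fix y assume "y \<in> (\<lambda>B. valS S B + (if a \<in> B then 1 else -1)) ` F"
    then obtain B where B: "B \<in> F" "y = valS S B + (if a \<in> B then 1 else -1)" by auto
    show "y \<le> M + 1"
    proof (cases "a \<in> B")
      case True
      thus ?thesis using geM[of B] B Fa_def by auto
    next
      case False
      obtain B3 where "B3 \<in> F" "a \<in> B3" "valS S B \<le> valS S B3 + 2"
        using SCore[OF dm iE S Si a B(1) False exa] by blast
      hence "valS S B \<le> M + 2" using geM[of B3] Fa_def by auto
      thus ?thesis using B False by auto
    qed
  qed
  thus ?thesis unfolding rank_ins[OF dm iE Si a] M_def Fa_def .
qed


lemma rank_const:
  assumes dm: "delta_matroid E F" and iE: "i \<in> E" and Si: "int i \<notin> S" "- int i \<notin> S"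
    and a: "a = int i \<or> a = - int i" and all: "\<forall>B\<in>F. a \<in> B"
  shows "rank_dm F (insert a S) = rank_dm F S + 1" "rank_dm F (insert (- a) S) = rank_dm F S - 1"
proof -
  note f = dm_facts[OF dm]
  have "rank_dm F (insert a S) = Max ((\<lambda>B. valS S B + 1) ` F)"
    unfolding rank_ins[OF dm iE Si a] using all by (intro arg_cong[where f=Max] image_cong) auto
  thus "rank_dm F (insert a S) = rank_dm F S + 1"
    unfolding rank_valS using Max_add_commute[OF f(6) f(3)] by simp
  have a2: "- a = int i \<or> - a = - int i" using a by auto
  have nb: "- a \<notin> B" if "B \<in> F" for B using Full[OF dm that iE] all that a by auto
  have "rank_dm F (insert (- a) S) = Max ((\<lambda>B. valS S B + (- 1)) ` F)"
    unfolding rank_ins[OF dm iE Si a2] using nb by (intro arg_cong[where f=Max] image_cong) auto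
  thus "rank_dm F (insert (- a) S) = rank_dm F S - 1"
    unfolding rank_valS using Max_add_commute[OF f(6) f(3), of "valS S" "-1"] by simp
qed

lemma rank_le_card:
  assumes "finite G" "G \<noteq> {}" "finite S"
  shows "rank_dm G S \<le> int (card S)"
proof -
  have "valS S B \<le> int (card S)" for B
  proof -
    have "card (S \<inter> B) \<le> card S" using assms(3) by (simp add: card_mono)
    thus ?thesis unfolding valS_def by simp
  qed
  thus ?thesis unfolding rank_valS using assms by simp
qed

lemma AdS_dec:
  assumes z: "0 \<notin> E" and iE: "i \<in> E"
  shows "AdS E = AdS (E - {i}) \<union> (insert (int i) ` AdS (E - {i}) \<union> insert (- int i) ` AdS (E - {i}))"
    "AdS (E - {i}) \<inter> (insert (int i) ` AdS (E - {i}) \<union> insert (- int i) ` AdS (E - {i})) = {}"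
    "insert (int i) ` AdS (E - {i}) \<inter> insert (- int i) ` AdS (E - {i}) = {}"
    "inj_on (insert (int i)) (AdS (E - {i}))" "inj_on (insert (- int i)) (AdS (E - {i}))"
proof -
  have z': "0 \<notin> E - {i}" using z by auto
  have i0: "i \<noteq> 0" using z iE by metis
  have sgE: "signed_ground (E - {i}) = signed_ground E - {int i, - int i}"
    unfolding signed_ground_def using i0 by auto
  have nI: "int i \<notin> S" "- int i \<notin> S" if "S \<in> AdS (E - {i})" for S
    using that sgE by (auto simp: AdS_def admissible_def)
  show "AdS E = AdS (E - {i}) \<union> (insert (int i) ` AdS (E - {i}) \<union> insert (- int i) ` AdS (E - {i}))"
  proof
    show "AdS E \<subseteq> AdS (E - {i}) \<union> (insert (int i) ` AdS (E - {i}) \<union> insert (- int i) ` AdS (E - {i}))"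
    proof
      fix S assume S: "S \<in> AdS E"
      hence Ssub: "S \<subseteq> signed_ground E" and Sadm: "\<forall>a\<in>S. - a \<notin> S" by (auto simp: AdS_def admissible_def)
      consider "int i \<in> S" | "- int i \<in> S" | "int i \<notin> S" "- int i \<notin> S" by blast
      thus "S \<in> AdS (E - {i}) \<union> (insert (int i) ` AdS (E - {i}) \<union> insert (- int i) ` AdS (E - {i}))"
      proof cases
        case 1
        hence "- int i \<notin> S" using Sadm by auto
        hence "S - {int i} \<in> AdS (E - {i})" using Ssub Sadm sgE by (auto simp: AdS_def admissible_def)
        moreover have "S = insert (int i) (S - {int i})" using 1 by auto
        ultimately show ?thesis by blast
      next
        case 2
        hence "int i \<notin> S" using Sadm by force
        hence "S - {- int i} \<in> AdS (E - {i})" using Ssub Sadm sgE by (auto simp: AdS_def admissible_def)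
        moreover have "S = insert (- int i) (S - {- int i})" using 2 by auto
        ultimately show ?thesis by blast
      next
        case 3
        hence "S \<in> AdS (E - {i})" using Ssub Sadm sgE by (auto simp: AdS_def admissible_def)
        thus ?thesis by blast
      qed
    qed
  next
    show "AdS (E - {i}) \<union> (insert (int i) ` AdS (E - {i}) \<union> insert (- int i) ` AdS (E - {i})) \<subseteq> AdS E"
    proof safe
      fix S assume S: "S \<in> AdS (E - {i})"
      note n = nI[OF S]
      have Ssub: "S \<subseteq> signed_ground E" and Sadm: "\<forall>a\<in>S. - a \<notin> S" using S sgE by (auto simp: AdS_def admissible_def)
      have iin: "int i \<in> signed_ground E" "- int i \<in> signed_ground E" using sg_int[OF z] sg_neg[OF z] iE by auto
      show "S \<in> AdS E" using Ssub Sadm by (auto simp: AdS_def admissible_def)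
      have nn: "\<forall>a\<in>S. - a \<noteq> int i" "\<forall>a\<in>S. a \<noteq> int i" using n by (metis minus_minus)+
      show "insert (int i) S \<in> AdS E" using Ssub Sadm n iin i0 nn by (auto simp: AdS_def admissible_def minus_equation_iff)
      show "insert (- int i) S \<in> AdS E" using Ssub Sadm n iin i0 by (auto simp: AdS_def admissible_def minus_equation_iff)
    qed
  qed
  show "AdS (E - {i}) \<inter> (insert (int i) ` AdS (E - {i}) \<union> insert (- int i) ` AdS (E - {i})) = {}"
    using nI by blast
  show "insert (int i) ` AdS (E - {i}) \<inter> insert (- int i) ` AdS (E - {i}) = {}"
    using nI i0 by fastforce
  show "inj_on (insert (int i)) (AdS (E - {i}))" "inj_on (insert (- int i)) (AdS (E - {i}))"
    unfolding inj_on_def using nI by (metis insert_ident)+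
qed

lemma AdS_finite: "finite E \<Longrightarrow> finite (AdS E)"
proof -
  assume "finite E"
  hence "finite (Pow (signed_ground E))" using sg_finite by simp
  moreover have "AdS E \<subseteq> Pow (signed_ground E)" by (auto simp: AdS_def admissible_def)
  ultimately show ?thesis using finite_subset by blast
qed


theorem proposition3p1:
  fixes E :: "nat set" and F :: "int set set" and u v :: "'a::comm_ring_1"
  assumes "delta_matroid E F"
  shows "(E = {} \<longrightarrow> Upoly E F u v = 1) \<and>
         (\<forall>i\<in>E.
            Upoly E F u v =
              (if \<not> is_loop F i \<and> \<not> is_coloop F i
               then Upoly (E - {i}) (dm_contract F i) u v
                    + Upoly (E - {i}) (dm_delete F i) u v
                    + u * Upoly (E - {i}) (dm_proj F i) u v
               else (u + v + 1) * Upoly (E - {i}) (dm_delete F i) u v))"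
proof (intro conjI impI ballI)
  note dm = assms
  note f = dm_facts[OF dm]
  show "Upoly E F u v = 1" if E0: "E = {}"
  proof -
    have A: "AdS E = {{}}" unfolding AdS_def admissible_def signed_ground_def E0 by auto
    have "rank_dm F {} = 0" unfolding rank_valS valS_def using f(3) by (simp add: image_constant_conv)
    thus ?thesis unfolding Upoly_def A using E0 by simp
  qed
  fix i assume iE: "i \<in> E"
  define E' where "E' = E - {i}"
  define T where "T = (\<lambda>(n::nat) G S. u ^ (n - card S) * v ^ nat ((int (card S) - rank_dm G S) div 2))"
  have UT: "Upoly X G u v = (\<Sum>S\<in>AdS X. T (card X) G S)" for X G unfolding Upoly_def T_def by simp
  note dec = AdS_dec[OF f(2) iE, folded E'_def]
  have finA: "finite (AdS E')" using AdS_finite f(1) E'_def by simp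
  have U: "Upoly E F u v = (\<Sum>S\<in>AdS E'. T (card E) F S) + (\<Sum>S\<in>AdS E'. T (card E) F (insert (int i) S))
          + (\<Sum>S\<in>AdS E'. T (card E) F (insert (- int i) S))"
    unfolding UT dec(1)
    using finA dec(2-5)
    by (simp add: sum.union_disjoint sum.reindex)
  have cE: "card E = Suc (card E')" using card_Suc_Diff1[OF f(1) iE] E'_def by simp
  have finE': "finite E'" "0 \<notin> E'" using f(1,2) E'_def by auto
  note Sf = S_facts[OF dm iE, folded E'_def]
  have cS: "card S \<le> card E'" if "S \<in> AdS E'" for S
    using card_adm[OF finE'] Sf(5)[OF that] by simp
  have finP: "finite (dm_proj F i)" "dm_proj F i \<noteq> {}" using f(3,6) by (auto simp: dm_proj_def)
  have T0: "T (card E) F S = u * T (card E') (dm_proj F i) S" if S: "S \<in> AdS E'" for S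
  proof -
    have "card E - card S = Suc (card E' - card S)" using cE cS[OF S] by simp
    thus ?thesis unfolding T_def using rank_proj[OF Sf(2,3)[OF S], of F] by simp
  qed
  show "Upoly E F u v =
              (if \<not> is_loop F i \<and> \<not> is_coloop F i
               then Upoly (E - {i}) (dm_contract F i) u v
                    + Upoly (E - {i}) (dm_delete F i) u v
                    + u * Upoly (E - {i}) (dm_proj F i) u v
               else (u + v + 1) * Upoly (E - {i}) (dm_delete F i) u v)"
  proof (cases "\<not> is_loop F i \<and> \<not> is_coloop F i")
    case True
    have ex1: "\<exists>B\<in>F. int i \<in> B" using True by (auto simp: is_loop_def)
    have ex2: "\<exists>B\<in>F. int i \<notin> B" using True by (auto simp: is_coloop_def)
    have ex3: "\<exists>B\<in>F. - int i \<in> B" using ex2 Full[OF dm _ iE] by blast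
    have ex4: "\<exists>B\<in>F. - int i \<notin> B" using ex1 Full[OF dm _ iE] by blast
    have Tc: "T (card E) F (insert (int i) S) = T (card E') (dm_contract F i) S" if S: "S \<in> AdS E'" for S
    proof -
      have "rank_dm (dm_contract F i) S = Max (valS S ` {B\<in>F. int i \<in> B})"
        unfolding dm_contract_def using True by (simp add: rank_sub Sf(2,3)[OF S] mem_uminus_int)
      moreover have "rank_dm F (insert (int i) S) = Max (valS S ` {B\<in>F. int i \<in> B}) + 1"
        by (rule rank_main[OF dm iE Sf(1-3)[OF S] _ ex1 ex2]) simp
      moreover have "card (insert (int i) S) = Suc (card S)" using Sf(2,4)[OF S] by simp
      ultimately show ?thesis unfolding T_def using cE by simp
    qed
    have Td: "T (card E) F (insert (- int i) S) = T (card E') (dm_delete F i) S" if S: "S \<in> AdS E'" for S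
    proof -
      have "rank_dm (dm_delete F i) S = Max (valS S ` {B\<in>F. - int i \<in> B})"
        unfolding dm_delete_def using True by (simp add: rank_sub Sf(2,3)[OF S] mem_uminus_int)
      moreover have "rank_dm F (insert (- int i) S) = Max (valS S ` {B\<in>F. - int i \<in> B}) + 1"
        by (rule rank_main[OF dm iE Sf(1-3)[OF S] _ ex3 ex4]) simp
      moreover have "card (insert (- int i) S) = Suc (card S)" using Sf(3,4)[OF S] by simp
      ultimately show ?thesis unfolding T_def using cE by simp
    qed
    have "Upoly E F u v = u * (\<Sum>S\<in>AdS E'. T (card E') (dm_proj F i) S)
          + (\<Sum>S\<in>AdS E'. T (card E') (dm_contract F i) S) + (\<Sum>S\<in>AdS E'. T (card E') (dm_delete F i) S)"
      unfolding U sum_distrib_left using T0 Tc Td by simp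
    thus ?thesis using True unfolding UT E'_def by (simp add: algebra_simps)
  next
    case False
    have del: "dm_delete F i = dm_proj F i" using False by (simp add: dm_delete_def)
    obtain a where a: "a = int i \<or> a = - int i" "\<forall>B\<in>F. a \<in> B"
    proof (cases "is_coloop F i")
      case True thus ?thesis using that[of "int i"] by (auto simp: is_coloop_def)
    next
      case c: False
      hence "is_loop F i" using False by auto
      hence "\<forall>B\<in>F. - int i \<in> B" using Full[OF dm _ iE] by (auto simp: is_loop_def)
      thus ?thesis using that[of "- int i"] by auto
    qed
    have Ta: "T (card E) F (insert a S) = T (card E') (dm_proj F i) S"
      and Tb: "T (card E) F (insert (- a) S) = v * T (card E') (dm_proj F i) S" if S: "S \<in> AdS E'" for S
    proof -
      note rc = rank_const[OF dm iE Sf(2,3)[OF S] a]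
      have rp: "rank_dm (dm_proj F i) S = rank_dm F S" by (rule rank_proj[OF Sf(2,3)[OF S]])
      have na: "a \<notin> S" "- a \<notin> S" using a(1) Sf(2,3)[OF S] by auto
      have c1: "card (insert a S) = Suc (card S)" "card (insert (- a) S) = Suc (card S)"
        using na Sf(4)[OF S] by simp_all
      have le: "rank_dm (dm_proj F i) S \<le> int (card S)" by (rule rank_le_card[OF finP Sf(4)[OF S]])
      show "T (card E) F (insert a S) = T (card E') (dm_proj F i) S"
        unfolding T_def using c1 rc rp cE by simp
      have "(int (card S) + 1 - (rank_dm F S - 1)) div 2 = (int (card S) - rank_dm F S) div 2 + 1"
        by simp
      moreover have "(int (card S) - rank_dm F S) div 2 \<ge> 0" using le rp by simp
      ultimately have "nat ((int (card (insert (- a) S)) - rank_dm F (insert (- a) S)) div 2)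
           = Suc (nat ((int (card S) - rank_dm F S) div 2))" using c1 rc by simp
      thus "T (card E) F (insert (- a) S) = v * T (card E') (dm_proj F i) S"
        unfolding T_def using c1 rp cE by (simp add: algebra_simps)
    qed
    have "Upoly E F u v = u * (\<Sum>S\<in>AdS E'. T (card E') (dm_proj F i) S)
          + (\<Sum>S\<in>AdS E'. T (card E') (dm_proj F i) S) + v * (\<Sum>S\<in>AdS E'. T (card E') (dm_proj F i) S)"
    proof (cases "a = int i")
      case True
      have "- a = - int i" using True by simp
      show ?thesis unfolding U sum_distrib_left using T0 Ta Tb True by simp
    next
      case False
      hence a2: "a = - int i" "- a = int i" using a(1) by auto
      show ?thesis unfolding U sum_distrib_left using T0 Ta Tb a2 by simp
    qed
    thus ?thesis unfolding UT E'_def del by (subst if_not_P[OF False]) (simp add: algebra_simps)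
  qed
qed


end
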